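(* Let $P_1=(X_1,Y_1)\neq(0,0)$ be a rational point of the plane with $Y_1\neq 0$, let $O=(0,0)$, and put $N=X_1^2+Y_1^2$. A point $P=(X,Y)$ of the plane is a rational point lying on the perpendicular bisector of the segment $OP_1$ and at rational distance from $O$ (equivalently, $P$ is the apex of a triangle in $\mathcal R$) if and only if there exist $t\in\mathbb{Q}$ with $t^2N\neq 4$ and a sign $\varepsilon\in\{+1,-1\}$ such that $$X=\frac{X_1}{2}+\varepsilon\,\frac{t^2X_1N-4tN+4X_1}{2(t^2N-4)},\qquad Y=\frac{Y_1}{2}+\varepsilon\,\frac{X_1\bigl(4tN-t^2X_1N-4X_1\bigr)}{2Y_1(t^2N-4)} .$$ In that case $|OP|=|PP_1|=|R|$, where $$R=\frac{(tN-2X_1)^2+4Y_1^2}{2t^2Y_1N-8Y_1}.$$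
   Context: A rational point of the plane is a point with rational coordinates; a rational triangle is one whose three side lengths are rational. For a fixed rational point $P_1\neq O$, $\mathcal R$ denotes the set of rational isosceles triangles $\triangle OPP_1$ with base $OP_1$, with $P$ a rational point and $|OP|=|PP_1|$; such a triangle is determined by its apex $P$, which lies on the perpendicular bisector $y=-\frac{X_1}{Y_1}x+\frac{X_1^2+Y_1^2}{2Y_1}$ of $OP_1$. *)

theory Defs
  imports Complex_Main
begin

end

theory Submission
  imports Defs
begin

lemma key:
  fixes a X1 Y1 X Y :: real
  assumes "Y1 \<noteq> 0" "X = X1/2 + a" "Y = Y1/2 - X1*a/Y1"
  shows "X^2+Y^2 = (X1^2+Y1^2)*(Y1^2+4*a^2)/(4*Y1^2)"
    "(X-X1)^2+(Y-Y1)^2 = (X1^2+Y1^2)*(Y1^2+4*a^2)/(4*Y1^2)"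
  using assms by (simp_all add: field_simps power2_eq_square, algebra+)

lemma poly: fixes t X1 Y1 N :: real
  assumes "N = X1^2+Y1^2"
  shows "N*(Y1^2*(t^2*N-4)^2 + (t^2*X1*N - 4*t*N + 4*X1)^2) = ((t*N-2*X1)^2+4*Y1^2)^2"
  unfolding assms by algebra

lemma part2:
  fixes X1 Y1 X Y N t \<epsilon> :: real
  assumes Y1: "Y1 \<noteq> 0" and N_def: "N = X1^2 + Y1^2" and eps: "\<epsilon> \<in> {1, -1}"
    and D: "t^2 * N \<noteq> 4"
    and hX: "X = X1 / 2 + \<epsilon> * (t^2 * X1 * N - 4 * t * N + 4 * X1) / (2 * (t^2 * N - 4))"
    and hY: "Y = Y1 / 2 + \<epsilon> * (X1 * (4 * t * N - t^2 * X1 * N - 4 * X1)) / (2 * Y1 * (t^2 * N - 4))"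
  shows "X^2+Y^2 = (((t * N - 2 * X1)^2 + 4 * Y1^2) / (2 * t^2 * Y1 * N - 8 * Y1))^2"
    "(X - X1)^2 + (Y - Y1)^2 = (((t * N - 2 * X1)^2 + 4 * Y1^2) / (2 * t^2 * Y1 * N - 8 * Y1))^2"
    "Y = Y1/2 - X1 * (X - X1/2) / Y1"
proof -
  define D where "D = t^2*N - 4"
  define A where "A = t^2 * X1 * N - 4 * t * N + 4 * X1"
  define a where "a = \<epsilon> * A / (2*D)"
  have Dn: "D \<noteq> 0" using D unfolding D_def by simp
  have e2: "\<epsilon>^2 = 1" using eps by auto
  have X: "X = X1/2 + a" using hX unfolding a_def A_def D_def by simp
  have Y: "Y = Y1/2 - X1*a/Y1" using hY Dn Y1 unfolding a_def A_def D_def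
    by (simp add: field_simps)
  show "Y = Y1/2 - X1 * (X - X1/2) / Y1" using X Y by simp
  have a2: "Y1^2+4*a^2 = (Y1^2*D^2 + A^2)/D^2" unfolding a_def using Dn e2
    by (simp add: field_simps power_mult_distrib)
  have den: "2 * t^2 * Y1 * N - 8 * Y1 = 2*Y1*D" unfolding D_def by algebra
  have "N*(Y1^2+4*a^2)/(4*Y1^2) = (((t * N - 2 * X1)^2 + 4 * Y1^2) / (2 * t^2 * Y1 * N - 8 * Y1))^2"
  proof -
    have "N*(Y1^2+4*a^2)/(4*Y1^2) = N*(Y1^2*D^2 + A^2)/(4*Y1^2*D^2)" using a2 by simp
    also have "\<dots> = ((t*N-2*X1)^2+4*Y1^2)^2/(4*Y1^2*D^2)"
      using poly[OF N_def, of t] unfolding A_def D_def by simp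
    also have "\<dots> = (((t * N - 2 * X1)^2 + 4 * Y1^2) / (2*Y1*D))^2"
      by (simp add: power_divide power_mult_distrib)
    finally show ?thesis unfolding den .
  qed
  then show "X^2+Y^2 = (((t * N - 2 * X1)^2 + 4 * Y1^2) / (2 * t^2 * Y1 * N - 8 * Y1))^2"
    "(X - X1)^2 + (Y - Y1)^2 = (((t * N - 2 * X1)^2 + 4 * Y1^2) / (2 * t^2 * Y1 * N - 8 * Y1))^2"
    using key[OF Y1 X Y] N_def by simp_all
qed

theorem proposition1:
  fixes X1 Y1 X Y N :: real
  assumes "X1 \<in> \<rat>" and "Y1 \<in> \<rat>" and "(X1, Y1) \<noteq> (0, 0)" and "Y1 \<noteq> 0"
    and N_def: "N = X1^2 + Y1^2"
  shows "((X \<in> \<rat> \<and> Y \<in> \<rat> \<and> Y = - (X1 / Y1) * X + N / (2 * Y1)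
            \<and> sqrt (X^2 + Y^2) \<in> \<rat>)
         \<longleftrightarrow> (\<exists>t \<in> \<rat>. \<exists>\<epsilon> \<in> {1, -1::real}. t^2 * N \<noteq> 4
              \<and> X = X1 / 2 + \<epsilon> * (t^2 * X1 * N - 4 * t * N + 4 * X1) / (2 * (t^2 * N - 4))
              \<and> Y = Y1 / 2 + \<epsilon> * (X1 * (4 * t * N - t^2 * X1 * N - 4 * X1)) / (2 * Y1 * (t^2 * N - 4))))
    \<and> (\<forall>t \<in> \<rat>. \<forall>\<epsilon> \<in> {1, -1::real}. t^2 * N \<noteq> 4
              \<and> X = X1 / 2 + \<epsilon> * (t^2 * X1 * N - 4 * t * N + 4 * X1) / (2 * (t^2 * N - 4))
              \<and> Y = Y1 / 2 + \<epsilon> * (X1 * (4 * t * N - t^2 * X1 * N - 4 * X1)) / (2 * Y1 * (t^2 * N - 4))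
            \<longrightarrow> sqrt (X^2 + Y^2) = \<bar>((t * N - 2 * X1)^2 + 4 * Y1^2) / (2 * t^2 * Y1 * N - 8 * Y1)\<bar>
              \<and> sqrt ((X - X1)^2 + (Y - Y1)^2) = \<bar>((t * N - 2 * X1)^2 + 4 * Y1^2) / (2 * t^2 * Y1 * N - 8 * Y1)\<bar>)"
proof -
  note Y1 = \<open>Y1 \<noteq> 0\<close>
  have Npos: "N > 0" using Y1 N_def by (simp add: add_nonneg_pos)
  have NQ: "N \<in> \<rat>" using N_def assms(1,2) by simp
  have P2: "(\<forall>t \<in> \<rat>. \<forall>\<epsilon> \<in> {1, -1::real}. t^2 * N \<noteq> 4
              \<and> X = X1 / 2 + \<epsilon> * (t^2 * X1 * N - 4 * t * N + 4 * X1) / (2 * (t^2 * N - 4))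
              \<and> Y = Y1 / 2 + \<epsilon> * (X1 * (4 * t * N - t^2 * X1 * N - 4 * X1)) / (2 * Y1 * (t^2 * N - 4))
            \<longrightarrow> sqrt (X^2 + Y^2) = \<bar>((t * N - 2 * X1)^2 + 4 * Y1^2) / (2 * t^2 * Y1 * N - 8 * Y1)\<bar>
              \<and> sqrt ((X - X1)^2 + (Y - Y1)^2) = \<bar>((t * N - 2 * X1)^2 + 4 * Y1^2) / (2 * t^2 * Y1 * N - 8 * Y1)\<bar>)"
    using part2[OF Y1 N_def] by (metis real_sqrt_abs)
  have P1: "(X \<in> \<rat> \<and> Y \<in> \<rat> \<and> Y = - (X1 / Y1) * X + N / (2 * Y1)
            \<and> sqrt (X^2 + Y^2) \<in> \<rat>)
         \<longleftrightarrow> (\<exists>t \<in> \<rat>. \<exists>\<epsilon> \<in> {1, -1::real}. t^2 * N \<noteq> 4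
              \<and> X = X1 / 2 + \<epsilon> * (t^2 * X1 * N - 4 * t * N + 4 * X1) / (2 * (t^2 * N - 4))
              \<and> Y = Y1 / 2 + \<epsilon> * (X1 * (4 * t * N - t^2 * X1 * N - 4 * X1)) / (2 * Y1 * (t^2 * N - 4)))"
  proof
    assume H: "X \<in> \<rat> \<and> Y \<in> \<rat> \<and> Y = - (X1 / Y1) * X + N / (2 * Y1) \<and> sqrt (X^2 + Y^2) \<in> \<rat>"
    define r where "r = sqrt (X^2+Y^2)"
    define a where "a = X - X1/2"
    have rQ: "r \<in> \<rat>" using H unfolding r_def by blast
    have aQ: "a \<in> \<rat>" using H assms(1) a_def by simp
    have X: "X = X1/2 + a" using a_def by simp
    have L: "Y = - (X1 / Y1) * X + N / (2 * Y1)" using H by blast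
    have L2: "Y1*(2*X*X1 + 2*Y*Y1 - (X1^2+Y1^2)) = 0" using L Y1 N_def
      by (simp add: field_simps power2_eq_square)
    have L3: "2*X*X1 + 2*Y*Y1 - (X1^2+Y1^2) = 0" using L2 Y1 by simp
    have Y: "Y = Y1/2 - X1*a/Y1" using L3 Y1 unfolding a_def
      by (simp add: field_simps power2_eq_square)
    have r2: "r^2 = N*(Y1^2+4*a^2)/(4*Y1^2)" using key(1)[OF Y1 X Y] N_def r_def by simp
    have r2': "4*Y1^2*r^2 = N*(Y1^2+4*a^2)" using r2 Y1 by (simp add: field_simps)
    obtain t where tQ: "t \<in> \<rat>" and quad: "N*(2*a-X1)*t^2 + 4*N*t - 8*a - 4*X1 = 0"
    proof (cases "2*a = X1")
      case True
      show ?thesis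
        apply (rule that[of "2*X1/N"])
        using assms(1) NQ True Npos by (simp_all add: field_simps power2_eq_square)
    next
      case False
      define q where "q = N*(2*a-X1)"
      have qn: "q \<noteq> 0" using False Npos q_def by simp
      define t where "t = (-2*N+4*Y1*r)/q"
      have qt: "q*t = -2*N+4*Y1*r" using qn t_def by simp
      have "q*(q*t^2 + 4*N*t - 8*a - 4*X1) = (q*t)^2 + 4*N*(q*t) - (8*a+4*X1)*q"
        by algebra
      also have "\<dots> = 0" unfolding qt unfolding q_def using r2' N_def by algebra
      finally have "q*t^2 + 4*N*t - 8*a - 4*X1 = 0" using qn by simp
      then show ?thesis
        apply (intro that[of t])
        using t_def q_def rQ aQ NQ assms(1,2) by simp_all
    qed
    have Dn: "t^2*N \<noteq> 4"
    proof
      assume h: "t^2*N = 4"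
      have "N*(2*a-X1)*t^2 = 4*(2*a-X1)" proof - have "N*(2*a-X1)*t^2 = (2*a-X1)*(t^2*N)" by (simp add: algebra_simps) thus ?thesis using h by simp qed
      with quad have "4*N*t = 8*X1" by simp
      hence "t = 2*X1/N" using Npos by (simp add: field_simps)
      with h have "4*X1^2/N = 4" using Npos by (simp add: power2_eq_square field_simps)
      hence "X1^2 = N" using Npos by (simp add: field_simps)
      thus False using N_def Y1 by simp
    qed
    have D0: "t^2*N - 4 \<noteq> 0" using Dn by simp
    have hX: "X = X1 / 2 + 1 * (t^2 * X1 * N - 4 * t * N + 4 * X1) / (2 * (t^2 * N - 4))"
      using X quad D0 by (simp add: field_simps) algebra
    have hY: "Y = Y1 / 2 + 1 * (X1 * (4 * t * N - t^2 * X1 * N - 4 * X1)) / (2 * Y1 * (t^2 * N - 4))"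
      using Y X hX D0 Y1 by (simp add: field_simps) algebra
    show "\<exists>t \<in> \<rat>. \<exists>\<epsilon> \<in> {1, -1::real}. t^2 * N \<noteq> 4
              \<and> X = X1 / 2 + \<epsilon> * (t^2 * X1 * N - 4 * t * N + 4 * X1) / (2 * (t^2 * N - 4))
              \<and> Y = Y1 / 2 + \<epsilon> * (X1 * (4 * t * N - t^2 * X1 * N - 4 * X1)) / (2 * Y1 * (t^2 * N - 4))"
      using tQ Dn hX hY by blast
  next
    assume "\<exists>t \<in> \<rat>. \<exists>\<epsilon> \<in> {1, -1::real}. t^2 * N \<noteq> 4
              \<and> X = X1 / 2 + \<epsilon> * (t^2 * X1 * N - 4 * t * N + 4 * X1) / (2 * (t^2 * N - 4))
              \<and> Y = Y1 / 2 + \<epsilon> * (X1 * (4 * t * N - t^2 * X1 * N - 4 * X1)) / (2 * Y1 * (t^2 * N - 4))"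
    then obtain t \<epsilon> where tQ: "t \<in> \<rat>" and eps: "\<epsilon> \<in> {1, -1::real}" and D: "t^2 * N \<noteq> 4"
      and hX: "X = X1 / 2 + \<epsilon> * (t^2 * X1 * N - 4 * t * N + 4 * X1) / (2 * (t^2 * N - 4))"
      and hY: "Y = Y1 / 2 + \<epsilon> * (X1 * (4 * t * N - t^2 * X1 * N - 4 * X1)) / (2 * Y1 * (t^2 * N - 4))"
      by blast
    have eQ: "\<epsilon> \<in> \<rat>" using eps by auto
    have XQ: "X \<in> \<rat>" using hX tQ eQ NQ assms(1,2) by simp
    have YQ: "Y \<in> \<rat>" using hY tQ eQ NQ assms(1,2) by simp
    note pp = part2[OF Y1 N_def eps D hX hY]
    have line: "Y = - (X1 / Y1) * X + N / (2 * Y1)" using pp(3) Y1 N_def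
      by (simp add: field_simps power2_eq_square) algebra
    have "sqrt (X^2+Y^2) = \<bar>((t * N - 2 * X1)^2 + 4 * Y1^2) / (2 * t^2 * Y1 * N - 8 * Y1)\<bar>"
      using pp(1) by simp
    moreover have "\<bar>((t * N - 2 * X1)^2 + 4 * Y1^2) / (2 * t^2 * Y1 * N - 8 * Y1)\<bar> \<in> \<rat>"
      using tQ NQ assms(1,2) by simp
    ultimately show "X \<in> \<rat> \<and> Y \<in> \<rat> \<and> Y = - (X1 / Y1) * X + N / (2 * Y1) \<and> sqrt (X^2 + Y^2) \<in> \<rat>"
      using XQ YQ line by simp
  qed
  show ?thesis using P1 P2 by blast
qed

end
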